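(* Consider the following edge-labeled graph (the "3-color gadget") with three categories red, blue, green: node set $\{u,v,a,b,c,d\}$ and six edges forming a cycle, namely $\{u,c\}$ labeled blue, $\{c,d\}$ labeled green, $\{d,v\}$ labeled red, $\{v,b\}$ labeled blue, $\{b,a\}$ labeled green, $\{a,u\}$ labeled red. Then the minimum of $\mathrm{CatEdgeClus}(Y)$ over all assignments $Y:\{u,v,a,b,c,d\}\to\{\text{red},\text{blue},\text{green}\}$ equals $3$, and every assignment $Y$ with $\mathrm{CatEdgeClus}(Y)=3$ satisfies $\{Y[u],Y[v]\}=\{\text{red},\text{blue}\}$ (one of $u,v$ is red and the other is blue).
   Context: For an edge-labeled graph with node set $V$, edge collection $E$, categories $C$ and labeling $\ell:E\to C$, and a clustering (node coloring) $Y:V\to C$, an edge $e$ is a mistake ($m_Y(e)=1$) if some endpoint $i\in e$ has $Y[i]\neq\ell(e)$, and $m_Y(e)=0$ otherwise; $\mathrm{CatEdgeClus}(Y)=\sum_{e\in E}m_Y(e)$ is the number of mistakes. *)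

theory Defs
  imports Main
begin

definition mistake :: "('v \<Rightarrow> 'c) \<Rightarrow> ('v set \<Rightarrow> 'c) \<Rightarrow> 'v set \<Rightarrow> nat" where
  "mistake Y lbl e = (if \<exists>i\<in>e. Y i \<noteq> lbl e then 1 else 0)"

definition CatEdgeClus :: "'v set set \<Rightarrow> ('v set \<Rightarrow> 'c) \<Rightarrow> ('v \<Rightarrow> 'c) \<Rightarrow> nat" where
  "CatEdgeClus E lbl Y = (\<Sum>e\<in>E. mistake Y lbl e)"

datatype node = U | V | A | B | C | D
datatype color = Red | Blue | Green

definition gadget_edges :: "node set set" where
  "gadget_edges = {{U, C}, {C, D}, {D, V}, {V, B}, {B, A}, {A, U}}"

definition gadget_label :: "node set \<Rightarrow> color" where
  "gadget_label e =
     (if e = {U, C} then Blue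
      else if e = {C, D} then Green
      else if e = {D, V} then Red
      else if e = {V, B} then Blue
      else if e = {B, A} then Green
      else Red)"

end

theory Submission
  imports Defs
begin

definition cost :: "color \<Rightarrow> color \<Rightarrow> color \<Rightarrow> color \<Rightarrow> color \<Rightarrow> color \<Rightarrow> nat" where
  "cost u v a b c d =
     (if u = Blue \<and> c = Blue then 0 else 1) + (if c = Green \<and> d = Green then 0 else 1)
   + (if d = Red \<and> v = Red then 0 else 1) + (if v = Blue \<and> b = Blue then 0 else 1)
   + (if b = Green \<and> a = Green then 0 else 1) + (if a = Red \<and> u = Red then 0 else 1)"

lemma cnt: "CatEdgeClus gadget_edges gadget_label Y = cost (Y U) (Y V) (Y A) (Y B) (Y C) (Y D)"
  unfolding CatEdgeClus_def gadget_edges_def cost_def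
  by (simp add: mistake_def gadget_label_def doubleton_eq_iff insert_commute)

lemma lb: "cost u v a b c d \<ge> 3"
  unfolding cost_def by (cases u; cases v; cases a; cases b; cases c; cases d) auto

lemma eq3: "cost u v a b c d = 3 \<Longrightarrow> {u, v} = {Red, Blue}"
  unfolding cost_def by (cases u; cases v; cases a; cases b; cases c; cases d) (auto simp: doubleton_eq_iff)

theorem mainTheorem3:
  shows "(LEAST k. \<exists>Y :: node \<Rightarrow> color. CatEdgeClus gadget_edges gadget_label Y = k) = 3
       \<and> (\<forall>Y :: node \<Rightarrow> color. CatEdgeClus gadget_edges gadget_label Y = 3 \<longrightarrow>
            {Y U, Y V} = {Red, Blue})"
proof
  let ?Y = "\<lambda>x. case x of U \<Rightarrow> Red | A \<Rightarrow> Red | C \<Rightarrow> Green | D \<Rightarrow> Green | _ \<Rightarrow> Blue"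
  have w: "CatEdgeClus gadget_edges gadget_label ?Y = 3"
    unfolding cnt by (simp add: cost_def)
  show "(LEAST k. \<exists>Y :: node \<Rightarrow> color. CatEdgeClus gadget_edges gadget_label Y = k) = 3"
  proof (rule Least_equality)
    show "\<exists>Y :: node \<Rightarrow> color. CatEdgeClus gadget_edges gadget_label Y = 3" using w by blast
  next
    fix k assume "\<exists>Y :: node \<Rightarrow> color. CatEdgeClus gadget_edges gadget_label Y = k"
    then show "3 \<le> k" using lb cnt by metis
  qed
  show "\<forall>Y :: node \<Rightarrow> color. CatEdgeClus gadget_edges gadget_label Y = 3 \<longrightarrow>
            {Y U, Y V} = {Red, Blue}" using eq3 cnt by metis
qed

end
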